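(* For a complex number $p$, $\deg(p)=1$ if and only if $p$ is a nonzero algebraic number. In particular every algebraic number is a period, and every period of degree $\le 1$ is algebraic.
   Context: Let $\overline{\mathbb{Q}}$ denote the field of algebraic numbers. For $n\ge 1$, an admissible domain in $\mathbb{R}^n$ is a subset of $\mathbb{R}^n$ which is a finite union of sets of the form $\{x\in\mathbb{R}^n : P_1(x)\,\square_1\, 0,\dots,P_r(x)\,\square_r\, 0\}$, where each $P_i$ is a polynomial with real algebraic coefficients and each $\square_i\in\{\ge,>\}$, and which has finite Lebesgue measure $\mathrm{vol}_n$. A real number $p$ is a real period if $p=\mathrm{vol}_n(\Sigma_1)-\mathrm{vol}_n(\Sigma_2)$ for some $n\ge1$ and admissible domains $\Sigma_1,\Sigma_2\subseteq\mathbb{R}^n$; a complex number is a period if its real and imaginary parts are real periods. The degree is defined as follows: $\deg(0)=0$; for a nonzero real period $p$, $\deg(p)$ is the least $n\ge 1$ such that $p=\mathrm{vol}_n(\Sigma_1)-\mathrm{vol}_n(\Sigma_2)$ with $\Sigma_1,\Sigma_2$ admissible domains in $\mathbb{R}^n$; for a complex period $p=a+ib$ ($a,b$ real), $\deg(p)=\max(\deg(a),\deg(b))$; for a complex number that is not a period, $\deg(p)=\infty$, with $\infty$ larger than every integer. *)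

theory Defs
  imports "HOL-Analysis.Analysis" "HOL-Computational_Algebra.Polynomial" "HOL-Library.Extended_Nat"
begin

text \<open>Points of R^n are modelled as functions nat => real in PiE {..<n} UNIV
  (coordinates 0..n-1, undefined elsewhere); Lebesgue measure on R^n is the
  n-fold product of lborel.\<close>

definition Rn :: "nat \<Rightarrow> (nat \<Rightarrow> real) set" where
  "Rn n = PiE {..<n} (\<lambda>_. UNIV)"

definition vol :: "nat \<Rightarrow> (nat \<Rightarrow> real) set \<Rightarrow> real" where
  "vol n S = measure (PiM {..<n} (\<lambda>_. lborel)) S"

inductive alg_poly :: "nat \<Rightarrow> ((nat \<Rightarrow> real) \<Rightarrow> real) \<Rightarrow> bool" for n where
  const: "algebraic c \<Longrightarrow> alg_poly n (\<lambda>x. c)"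
| var: "i < n \<Longrightarrow> alg_poly n (\<lambda>x. x i)"
| add: "alg_poly n P \<Longrightarrow> alg_poly n Q \<Longrightarrow> alg_poly n (\<lambda>x. P x + Q x)"
| mult: "alg_poly n P \<Longrightarrow> alg_poly n Q \<Longrightarrow> alg_poly n (\<lambda>x. P x * Q x)"

definition basic_set :: "nat \<Rightarrow> (((nat \<Rightarrow> real) \<Rightarrow> real) \<times> bool) list \<Rightarrow> (nat \<Rightarrow> real) set" where
  "basic_set n cs = {x \<in> Rn n. \<forall>(P, strict) \<in> set cs. (if strict then P x > 0 else P x \<ge> 0)}"

definition admissible :: "nat \<Rightarrow> (nat \<Rightarrow> real) set \<Rightarrow> bool" where
  "admissible n S \<longleftrightarrow>
     (\<exists>F. finite F \<and> S = \<Union>(basic_set n ` F) \<and>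
          (\<forall>cs\<in>F. \<forall>(P, _) \<in> set cs. alg_poly n P)) \<and>
     emeasure (PiM {..<n} (\<lambda>_. lborel)) S < \<infinity>"

definition real_period_dims :: "real \<Rightarrow> nat set" where
  "real_period_dims p = {n. n \<ge> 1 \<and> (\<exists>S1 S2. admissible n S1 \<and> admissible n S2 \<and>
       p = vol n S1 - vol n S2)}"

definition real_period :: "real \<Rightarrow> bool" where
  "real_period p \<longleftrightarrow> real_period_dims p \<noteq> {}"

definition period :: "complex \<Rightarrow> bool" where
  "period z \<longleftrightarrow> real_period (Re z) \<and> real_period (Im z)"

definition real_deg :: "real \<Rightarrow> enat" where
  "real_deg p = (if p = 0 then 0
                 else if real_period p then enat (LEAST n. n \<in> real_period_dims p)
                 else \<infinity>)"

definition deg :: "complex \<Rightarrow> enat" where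
  "deg z = (if period z then max (real_deg (Re z)) (real_deg (Im z)) else \<infinity>)"

end

theory Submission
  imports Defs
begin


definition qscale :: "rat \<Rightarrow> 'a::field_char_0 \<Rightarrow> 'a" where
  "qscale r x = of_rat r * x"

global_interpretation Q: vector_space "qscale :: rat \<Rightarrow> 'a::field_char_0 \<Rightarrow> 'a"
  by unfold_locales (auto simp: qscale_def algebra_simps of_rat_add of_rat_mult)

lemma Q_span_scale: "x \<in> Q.span S \<Longrightarrow> of_rat c * x \<in> Q.span S"
  using Q.span_scale[of x S c] by (simp add: qscale_def)

definition RT :: "'a::field_char_0 set \<Rightarrow> 'a set" where
  "RT T = {s. \<forall>t\<in>T. s * t \<in> Q.span T}"

lemma RT_span: assumes "s \<in> RT T" "v \<in> Q.span T" shows "s * v \<in> Q.span T"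
proof -
  have "Q.subspace {v. s * v \<in> Q.span T}"
  proof (rule Q.subspaceI)
    show "0 \<in> {v. s * v \<in> Q.span T}" by (simp add: Q.span_zero)
    show "x + y \<in> {v. s * v \<in> Q.span T}" if "x \<in> {v. s * v \<in> Q.span T}" "y \<in> {v. s * v \<in> Q.span T}" for x y
      using Q.span_add[OF that[simplified]] by (simp add: distrib_left)
    show "qscale c x \<in> {v. s * v \<in> Q.span T}" if "x \<in> {v. s * v \<in> Q.span T}" for c x
      using Q_span_scale[OF that[simplified], of c] by (simp add: qscale_def mult.left_commute)
  qed
  moreover have "T \<subseteq> {v. s * v \<in> Q.span T}" using assms(1) by (auto simp: RT_def)
  ultimately show ?thesis using Q.span_minimal assms(2) by blast
qed

lemma RT_rat: "of_rat r \<in> RT T"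
  by (auto simp: RT_def intro: Q_span_scale Q.span_base)

lemma RT_add: "a \<in> RT T \<Longrightarrow> b \<in> RT T \<Longrightarrow> a + b \<in> RT T"
  by (auto simp: RT_def distrib_right intro: Q.span_add)

lemma RT_mult: assumes a: "a \<in> RT T" and b: "b \<in> RT T" shows "a * b \<in> RT T"
proof -
  show ?thesis unfolding RT_def mem_Collect_eq
  proof
    fix t assume "t \<in> T"
    hence "b * t \<in> Q.span T" using b by (auto simp: RT_def)
    from RT_span[OF a this] show "a * b * t \<in> Q.span T" by (simp add: mult.assoc)
  qed
qed

lemma RT_algebraic:
  assumes fin: "finite T" and one: "1 \<in> Q.span T" and y: "y \<in> RT T"
  shows "algebraic y"
proof -
  have pw: "y ^ k \<in> Q.span T" for k
    by (induction k) (auto simp: one RT_span[OF y])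
  define N where "N = card T"
  show ?thesis
  proof (cases "inj_on (\<lambda>k. y ^ k) {..N}")
    case False
    then obtain i j where ij: "i \<le> N" "j \<le> N" "i \<noteq> j" "y ^ i = y ^ j"
      unfolding inj_on_def by auto
    show ?thesis
    proof (rule algebraicI[of "monom 1 i - monom 1 j"])
      show "\<And>k. coeff (monom 1 i - monom 1 j) k \<in> \<int>" by (auto simp: coeff_monom)
      show "monom 1 i - monom 1 j \<noteq> (0::'a poly)"
        using ij(3) by (metis coeff_monom eq_iff_diff_eq_0 one_neq_zero)
      show "poly (monom 1 i - monom 1 j) y = 0" using ij(4) by (simp add: poly_monom)
    qed
  next
    case True
    define S where "S = (\<lambda>k. y ^ k) ` {..N}"
    have cS: "card S = Suc N" using True by (simp add: S_def card_image)
    have "S \<subseteq> Q.span T" using pw by (auto simp: S_def)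
    hence "Q.dependent S" using Q.independent_span_bound[OF fin, of S] cS N_def by auto
    then obtain t u where tu: "finite t" "t \<subseteq> S" "(\<Sum>v\<in>t. of_rat (u v) * v) = 0" "\<exists>v\<in>t. u v \<noteq> 0"
      unfolding Q.dependent_explicit qscale_def by blast
    define K where "K = {k\<in>{..N}. y ^ k \<in> t}"
    have tK: "t = (\<lambda>k. y ^ k) ` K" using tu(2) by (auto simp: K_def S_def)
    have injK: "inj_on (\<lambda>k. y ^ k) K" using True by (rule inj_on_subset) (auto simp: K_def)
    define p :: "'a poly" where "p = (\<Sum>k\<in>K. monom (of_rat (u (y ^ k))) k)"
    have fK: "finite K" by (auto simp: K_def)
    have cp: "coeff p i = (if i \<in> K then of_rat (u (y ^ i)) else 0)" for i
      unfolding p_def coeff_sum using fK by (auto simp: coeff_monom)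
    show ?thesis
    proof (rule algebraicI'[where p=p])
      show "coeff p i \<in> \<rat>" for i by (simp add: cp)
      from tu(4) obtain k where "k \<in> K" "u (y ^ k) \<noteq> 0" using tK by auto
      hence "coeff p k \<noteq> 0" by (simp add: cp)
      thus "p \<noteq> 0" by auto
      have "poly p y = (\<Sum>k\<in>K. of_rat (u (y ^ k)) * y ^ k)"
        by (simp add: p_def poly_sum poly_monom)
      also have "\<dots> = (\<Sum>v\<in>t. of_rat (u v) * v)"
        unfolding tK by (simp add: sum.reindex[OF injK])
      finally show "poly p y = 0" using tu(3) by simp
    qed
  qed
qed

lemma span_mult_into:
  assumes "\<forall>t\<in>T. c * t \<in> Q.span U" "v \<in> Q.span T" shows "c * v \<in> Q.span U"
proof -
  have "Q.subspace {v. c * v \<in> Q.span U}"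
  proof (rule Q.subspaceI)
    show "0 \<in> {v. c * v \<in> Q.span U}" by (simp add: Q.span_zero)
    show "x + y \<in> {v. c * v \<in> Q.span U}" if "x \<in> {v. c * v \<in> Q.span U}" "y \<in> {v. c * v \<in> Q.span U}" for x y
      using Q.span_add[OF that[simplified]] by (simp add: distrib_left)
    show "qscale r x \<in> {v. c * v \<in> Q.span U}" if "x \<in> {v. c * v \<in> Q.span U}" for r x
      using Q_span_scale[OF that[simplified], of r] by (simp add: qscale_def mult.left_commute)
  qed
  moreover have "T \<subseteq> {v. c * v \<in> Q.span U}" using assms(1) by auto
  ultimately show ?thesis using Q.span_minimal assms(2) by blast
qed

lemma RT_Rats: "x \<in> \<rat> \<Longrightarrow> x \<in> RT T"
  by (auto elim!: Rats_cases simp: RT_rat)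

lemma RT_adjoin:
  fixes y :: "'a::field_char_0"
  assumes fin: "finite T" and one: "1 \<in> Q.span T" and d: "d > 0"
    and eq: "y ^ d = (\<Sum>i<d. u i * y ^ i)" and u: "\<And>i. i < d \<Longrightarrow> u i \<in> RT T"
  shows "\<exists>T'. finite T' \<and> 1 \<in> Q.span T' \<and> RT T \<subseteq> RT T' \<and> y \<in> RT T'"
proof -
  define T' where "T' = (\<lambda>(t,k). t * y ^ k) ` (T \<times> {..<d})"
  have inT': "t * y ^ k \<in> T'" if "t \<in> T" "k < d" for t k
    using that unfolding T'_def by force
  have TT': "T \<subseteq> T'" using inT'[of _ 0] d by auto
  have mulT': "y ^ k * v \<in> Q.span T'" if "v \<in> Q.span T" "k < d" for v k
    by (rule span_mult_into[OF _ that(1)]) (use inT' that(2) in \<open>auto simp: mult.commute intro: Q.span_base\<close>)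
  have "finite T'" using fin by (simp add: T'_def)
  moreover have "1 \<in> Q.span T'" using one Q.span_mono[OF TT'] by auto
  moreover have "RT T \<subseteq> RT T'"
  proof
    fix s assume s: "s \<in> RT T"
    show "s \<in> RT T'" unfolding RT_def mem_Collect_eq
    proof
      fix t' assume "t' \<in> T'"
      then obtain t k where tk: "t \<in> T" "k < d" "t' = t * y ^ k" by (auto simp: T'_def)
      have "s * t \<in> Q.span T" using s tk(1) by (auto simp: RT_def)
      from mulT'[OF this tk(2)] show "s * t' \<in> Q.span T'" by (simp add: tk(3) algebra_simps)
    qed
  qed
  moreover have "y \<in> RT T'"
    unfolding RT_def mem_Collect_eq
  proof
    fix t' assume "t' \<in> T'"
    then obtain t k where tk: "t \<in> T" "k < d" "t' = t * y ^ k" by (auto simp: T'_def)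
    show "y * t' \<in> Q.span T'"
    proof (cases "Suc k < d")
      case True
      thus ?thesis using inT'[OF tk(1) True] by (simp add: tk(3) Q.span_base algebra_simps)
    next
      case False
      hence kd: "Suc k = d" using tk(2) by simp
      have "y * t' = t * y ^ d" by (simp add: tk(3) kd[symmetric] algebra_simps)
      also have "\<dots> = (\<Sum>i<d. y ^ i * (u i * t))" by (simp add: eq sum_distrib_left algebra_simps)
      also have "\<dots> \<in> Q.span T'"
      proof (rule Q.span_sum)
        fix i assume i: "i \<in> {..<d}"
        have "u i * t \<in> Q.span T" using u[of i] i tk(1) by (auto simp: RT_def)
        thus "y ^ i * (u i * t) \<in> Q.span T'" using mulT' i by auto
      qed
      finally show ?thesis .
    qed
  qed
  ultimately show ?thesis by blast
qed

lemma poly_adjoin: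
  fixes y :: "'a::field_char_0"
  assumes fin: "finite T" and one: "1 \<in> Q.span T" and dq: "degree q > 0" and root: "poly q y = 0"
    and cq: "\<And>i. coeff q i \<in> RT T" and lq: "inverse (lead_coeff q) \<in> RT T"
  shows "\<exists>T'. finite T' \<and> 1 \<in> Q.span T' \<and> RT T \<subseteq> RT T' \<and> y \<in> RT T'"
proof -
  define d where "d = degree q"
  define c where "c = lead_coeff q"
  have c0: "c \<noteq> 0" using dq by (auto simp: c_def)
  have "0 = (\<Sum>i\<le>d. coeff q i * y ^ i)" using root by (simp add: poly_altdef d_def)
  also have "\<dots> = (\<Sum>i<d. coeff q i * y ^ i) + c * y ^ d"
    by (simp add: lessThan_Suc_atMost[symmetric] c_def d_def)
  finally have h0: "c * y ^ d + (\<Sum>i<d. coeff q i * y ^ i) = 0"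
    by (metis add.commute)
  hence h: "c * y ^ d = - (\<Sum>i<d. coeff q i * y ^ i)"
    by (rule iffD2[OF eq_neg_iff_add_eq_0])
  have "y ^ d = inverse c * (c * y ^ d)" using c0 by simp
  also have "\<dots> = (\<Sum>i<d. (- coeff q i * inverse c) * y ^ i)"
  proof -
    have "inverse c * (c * y ^ d) = inverse c * (- (\<Sum>i<d. coeff q i * y ^ i))" by (simp only: h)
    also have "\<dots> = (\<Sum>i<d. inverse c * (- (coeff q i * y ^ i)))"
      by (simp only: sum_distrib_left sum_negf[symmetric])
    also have "\<dots> = (\<Sum>i<d. (- coeff q i * inverse c) * y ^ i)"
      by (rule sum.cong) (simp_all add: mult_ac)
    finally show ?thesis .
  qed
  finally have eq: "y ^ d = (\<Sum>i<d. (- coeff q i * inverse c) * y ^ i)" .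
  have u: "- coeff q i * inverse c \<in> RT T" for i
    using RT_mult[OF RT_mult[OF RT_rat[of "-1"] cq] lq] by (simp add: c_def)
  have d0: "d > 0" using dq by (simp add: d_def)
  show ?thesis by (rule RT_adjoin[OF fin one d0 eq u])
qed

lemma RT_exists:
  fixes xs :: "'a::field_char_0 list"
  assumes "\<forall>x\<in>set xs. algebraic x"
  shows "\<exists>T. finite T \<and> 1 \<in> Q.span T \<and> set xs \<subseteq> RT T"
  using assms
proof (induction xs)
  case Nil
  show ?case by (rule exI[of _ "{1}"]) (auto intro: Q.span_base)
next
  case (Cons a xs)
  then obtain T where T: "finite T" "1 \<in> Q.span T" "set xs \<subseteq> RT T" by auto
  from Cons.prems have "algebraic a" by auto
  then obtain p where p: "\<And>i. coeff p i \<in> \<rat>" "p \<noteq> 0" "poly p a = 0"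
    unfolding algebraic_altdef by blast
  have "degree p > 0"
  proof (rule ccontr)
    assume "\<not> degree p > 0"
    then obtain c where "p = [:c:]" by (metis degree_eq_zeroE gr0I)
    thus False using p by auto
  qed
  moreover have "inverse (lead_coeff p) \<in> \<rat>" using p(1) by simp
  ultimately obtain T' where "finite T'" "1 \<in> Q.span T'" "RT T \<subseteq> RT T'" "a \<in> RT T'"
    using poly_adjoin[OF T(1,2) _ p(3) RT_Rats[OF p(1)] RT_Rats] by blast
  thus ?case using T(3) by auto
qed

lemma alg_add: assumes "algebraic a" "algebraic b" shows "algebraic (a + b)"
proof -
  obtain T where "finite T" "1 \<in> Q.span T" "set [a,b] \<subseteq> RT T" using RT_exists[of "[a, b]"] assms by auto
  thus ?thesis by (intro RT_algebraic[of T] RT_add) auto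
qed

lemma alg_mult: assumes "algebraic a" "algebraic b" shows "algebraic (a * b)"
proof -
  obtain T where "finite T" "1 \<in> Q.span T" "set [a,b] \<subseteq> RT T" using RT_exists[of "[a, b]"] assms by auto
  thus ?thesis by (intro RT_algebraic[of T] RT_mult) auto
qed

lemma alg_diff: "algebraic a \<Longrightarrow> algebraic b \<Longrightarrow> algebraic (a - b)"
  using alg_add[of a "-b"] by simp

lemma alg_root:
  fixes q :: "'a::field_char_0 poly"
  assumes q: "q \<noteq> 0" "\<And>i. algebraic (coeff q i)" and r: "poly q x = 0"
  shows "algebraic x"
proof -
  have dq: "degree q > 0"
  proof (rule ccontr)
    assume "\<not> degree q > 0"
    then obtain c where "q = [:c:]" by (metis degree_eq_zeroE gr0I)
    thus False using q r by auto
  qed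
  define xs where "xs = inverse (lead_coeff q) # map (coeff q) [0..<Suc (degree q)]"
  obtain T where T: "finite T" "1 \<in> Q.span T" "set xs \<subseteq> RT T"
    using RT_exists[of xs] q(2) by (auto simp: xs_def)
  have "coeff q i \<in> RT T" for i
  proof (cases "i \<le> degree q")
    case True
    hence "i = degree q \<or> i \<in> {0..<degree q}" by auto
    thus ?thesis using T(3) by (auto simp: xs_def)
  next
    case False thus ?thesis by (simp add: coeff_eq_0 RT_Rats)
  qed
  moreover have "inverse (lead_coeff q) \<in> RT T" using T(3) by (auto simp: xs_def)
  ultimately obtain T' where "finite T'" "1 \<in> Q.span T'" "x \<in> RT T'"
    using poly_adjoin[OF T(1,2) dq r] by blast
  thus ?thesis using RT_algebraic by blast
qed

lemma alg_complex_iff: "algebraic (z::complex) \<longleftrightarrow> algebraic (Re z) \<and> algebraic (Im z)"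
proof
  assume z: "algebraic z"
  have "complex_of_real (Re z) = (z + cnj z) * inverse 2" by (simp add: complex_add_cnj)
  hence 1: "algebraic (Re z)"
    using alg_mult[OF alg_add[OF z algebraic_cnj[OF z]], of "inverse 2"]
    by (metis algebraic_inverse algebraic_numeral algebraic_of_real_iff)
  have "complex_of_real (Im z) = (z - cnj z) * inverse (2 * \<i>)" by (simp add: complex_diff_cnj field_simps)
  hence 2: "algebraic (Im z)"
    using alg_mult[OF alg_diff[OF z algebraic_cnj[OF z]], of "inverse (2*\<i>)"]
    by (metis alg_mult algebraic_ii algebraic_inverse algebraic_numeral algebraic_of_real_iff)
  show "algebraic (Re z) \<and> algebraic (Im z)" using 1 2 by blast
next
  assume "algebraic (Re z) \<and> algebraic (Im z)"
  hence "algebraic (complex_of_real (Re z) + \<i> * complex_of_real (Im z))"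
    by (intro alg_add alg_mult) auto
  thus "algebraic z" by (simp add: complex_eq[symmetric])
qed



definition zconst :: "real set \<Rightarrow> real set \<Rightarrow> bool" where
  "zconst Z A \<longleftrightarrow> (\<forall>x y. (\<forall>z\<in>Z. \<not> (min x y \<le> z \<and> z \<le> max x y)) \<longrightarrow> (x \<in> A \<longleftrightarrow> y \<in> A))"

lemma finite_null_lborel:
  assumes "finite (B::real set)" shows "B \<in> sets lborel" "measure lborel B = 0"
proof -
  have "B \<in> null_sets lborel" using assms by (rule finite_imp_null_set_lborel)
  thus "B \<in> sets lborel" "measure lborel B = 0" by (auto simp: measure_def null_setsD1)
qed

lemma zconst_interval:
  assumes fin: "finite Z" and Zalg: "\<forall>z\<in>Z. algebraic z" and zc: "zconst Z A"
  shows "a \<le> b \<Longrightarrow> algebraic a \<Longrightarrow> algebraic b \<Longrightarrow>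
     A \<inter> {a..b} \<in> sets lborel \<and> algebraic (measure lborel (A \<inter> {a..b}))"
proof (induction "card (Z \<inter> {a<..<b})" arbitrary: a b rule: less_induct)
  case less
  show ?case
  proof (cases "Z \<inter> {a<..<b} = {}")
    case True
    have same: "x \<in> A \<longleftrightarrow> y \<in> A" if "x \<in> {a<..<b}" "y \<in> {a<..<b}" for x y
    proof -
      have "\<forall>z\<in>Z. \<not> (min x y \<le> z \<and> z \<le> max x y)"
      proof (intro ballI notI)
        fix z assume "z \<in> Z" "min x y \<le> z \<and> z \<le> max x y"
        hence "z \<in> Z \<inter> {a<..<b}" using that by (auto simp: min_def max_def split: if_splits)
        thus False using True by auto
      qed
      thus ?thesis using zc by (auto simp: zconst_def)
    qed
    show ?thesis
    proof (cases "A \<inter> {a<..<b} = {}")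
      case True
      hence "A \<inter> {a..b} \<subseteq> {a, b}" by auto
      hence f: "finite (A \<inter> {a..b})" by (rule finite_subset) auto
      show ?thesis using finite_null_lborel[OF f] by simp
    next
      case False
      then obtain x0 where x0: "x0 \<in> A" "x0 \<in> {a<..<b}" by blast
      have sub: "{a<..<b} \<subseteq> A" using same x0 by blast
      have eq: "A \<inter> {a..b} = {a<..<b} \<union> (A \<inter> {a, b})" using sub less.prems(1) by auto
      have f: "finite (A \<inter> {a, b})" by auto
      have nul: "A \<inter> {a, b} \<in> null_sets lborel" by (rule finite_imp_null_set_lborel[OF f])
      have "A \<inter> {a..b} \<in> sets lborel" unfolding eq using nul by auto
      moreover have "measure lborel (A \<inter> {a..b}) = b - a"
        unfolding eq using measure_Un_null_set[OF _ nul, of "{a<..<b}"] less.prems by simp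
      ultimately show ?thesis using alg_diff less.prems by auto
    qed
  next
    case False
    then obtain z where z: "z \<in> Z" "a < z" "z < b" by auto
    have lt1: "card (Z \<inter> {a<..<z}) < card (Z \<inter> {a<..<b})"
      by (rule psubset_card_mono) (use fin z in auto)
    have lt2: "card (Z \<inter> {z<..<b}) < card (Z \<inter> {a<..<b})"
      by (rule psubset_card_mono) (use fin z in auto)
    have za: "algebraic z" using Zalg z by auto
    have IH1: "A \<inter> {a..z} \<in> sets lborel \<and> algebraic (measure lborel (A \<inter> {a..z}))"
      using less.hyps[OF lt1] z less.prems za by auto
    have IH2: "A \<inter> {z..b} \<in> sets lborel \<and> algebraic (measure lborel (A \<inter> {z..b}))"
      using less.hyps[OF lt2] z less.prems za by auto
    have eq: "A \<inter> {a..b} = A \<inter> {a..z} \<union> A \<inter> {z..b}" using z by auto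
    have fm1: "A \<inter> {a..z} \<in> fmeasurable lborel"
      by (rule fmeasurableI2[of "{a..z}"]) (use IH1 in \<open>auto simp: fmeasurable_def emeasure_lborel_Icc_eq\<close>)
    have fm2: "A \<inter> {z..b} \<in> fmeasurable lborel"
      by (rule fmeasurableI2[of "{z..b}"]) (use IH2 in \<open>auto simp: fmeasurable_def emeasure_lborel_Icc_eq\<close>)
    have "A \<inter> {a..z} \<inter> (A \<inter> {z..b}) \<subseteq> {z}" by auto
    hence "finite (A \<inter> {a..z} \<inter> (A \<inter> {z..b}))" by (rule finite_subset) auto
    hence m0: "measure lborel (A \<inter> {a..z} \<inter> (A \<inter> {z..b})) = 0" by (rule finite_null_lborel)
    have "measure lborel (A \<inter> {a..b}) = measure lborel (A \<inter> {a..z}) + measure lborel (A \<inter> {z..b})"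
      unfolding eq using measure_Un3[OF fm1 fm2] m0 by simp
    moreover have "A \<inter> {a..b} \<in> sets lborel" unfolding eq using IH1 IH2 by auto
    ultimately show ?thesis using alg_add IH1 IH2 by auto
  qed
qed

lemma ray_inf1:
  fixes a :: real assumes "{..<a} \<subseteq> A" "A \<in> sets lborel" shows "emeasure lborel A = \<infinity>"
proof (rule ccontr)
  assume fin: "emeasure lborel A \<noteq> \<infinity>"
  define r where "r = measure lborel A"
  have r0: "r \<ge> 0" by (simp add: r_def)
  have e: "emeasure lborel A = ennreal r" using fin by (simp add: r_def emeasure_eq_ennreal_measure)
  have "{a - (r+2)..a - 1} \<subseteq> A" using assms(1) by auto
  hence "emeasure lborel {a - (r+2)..a - 1} \<le> emeasure lborel A" by (rule emeasure_mono) (fact assms(2))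
  hence "ennreal (r + 1) \<le> ennreal r" using e r0 by (simp add: emeasure_lborel_Icc_eq)
  hence "r + 1 \<le> r" using r0 by (simp add: ennreal_le_iff)
  thus False by simp
qed

lemma ray_inf2:
  fixes b :: real assumes "{b<..} \<subseteq> A" "A \<in> sets lborel" shows "emeasure lborel A = \<infinity>"
proof (rule ccontr)
  assume fin: "emeasure lborel A \<noteq> \<infinity>"
  define r where "r = measure lborel A"
  have r0: "r \<ge> 0" by (simp add: r_def)
  have e: "emeasure lborel A = ennreal r" using fin by (simp add: r_def emeasure_eq_ennreal_measure)
  have "{b + 1..b + (r+2)} \<subseteq> A" using assms(1) by auto
  hence "emeasure lborel {b + 1..b + (r+2)} \<le> emeasure lborel A" by (rule emeasure_mono) (fact assms(2))
  hence "ennreal (r + 1) \<le> ennreal r" using e r0 by (simp add: emeasure_lborel_Icc_eq)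
  hence "r + 1 \<le> r" using r0 by (simp add: ennreal_le_iff)
  thus False by simp
qed

lemma zconst_total:
  assumes fin: "finite Z" and Zalg: "\<forall>z\<in>Z. algebraic z" and zc: "zconst Z A"
  shows "A \<in> sets lborel \<and> (emeasure lborel A < \<infinity> \<longrightarrow> algebraic (measure lborel A))"
proof (cases "Z = {}")
  case True
  hence all: "x \<in> A \<longleftrightarrow> y \<in> A" for x y using zc by (auto simp: zconst_def)
  show ?thesis
  proof (cases "A = {}")
    case True thus ?thesis by simp
  next
    case False
    hence "A = UNIV" using all by blast
    thus ?thesis by simp
  qed
next
  case False
  define a where "a = Min Z"
  define b where "b = Max Z"
  have aZ: "a \<in> Z" and bZ: "b \<in> Z" using False fin by (auto simp: a_def b_def)
  have ab: "a \<le> b" using False fin by (simp add: a_def b_def)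
  have za: "a \<le> z" "z \<le> b" if "z \<in> Z" for z using that fin by (auto simp: a_def b_def)
  have mid: "A \<inter> {a..b} \<in> sets lborel \<and> algebraic (measure lborel (A \<inter> {a..b}))"
    using zconst_interval[OF fin Zalg zc ab] aZ bZ Zalg by auto
  have L: "A \<inter> {..<a} = {} \<or> {..<a} \<subseteq> A"
  proof (cases "A \<inter> {..<a} = {}")
    case False
    then obtain x0 where x0: "x0 \<in> A" "x0 < a" by auto
    have "y \<in> A" if "y < a" for y
    proof -
      have m: "max x0 y < a" using x0 that by simp
      have "\<forall>z\<in>Z. \<not> (min x0 y \<le> z \<and> z \<le> max x0 y)"
        using za(1) m by (meson order.trans not_le)
      thus ?thesis using zc x0 by (auto simp: zconst_def)
    qed
    thus ?thesis by auto
  qed simp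
  have R: "A \<inter> {b<..} = {} \<or> {b<..} \<subseteq> A"
  proof (cases "A \<inter> {b<..} = {}")
    case False
    then obtain x0 where x0: "x0 \<in> A" "x0 > b" by auto
    have "y \<in> A" if "y > b" for y
    proof -
      have m: "min x0 y > b" using x0 that by simp
      have "\<forall>z\<in>Z. \<not> (min x0 y \<le> z \<and> z \<le> max x0 y)"
        using za(2) m by (meson order.trans not_le)
      thus ?thesis using zc x0 by (auto simp: zconst_def)
    qed
    thus ?thesis by auto
  qed simp
  have eqA: "A = (A \<inter> {..<a}) \<union> (A \<inter> {a..b}) \<union> (A \<inter> {b<..})" by auto
  have Lm: "A \<inter> {..<a} \<in> sets lborel" using L by (metis lessThan_borel sets_lborel Int_absorb1 sets.empty_sets)
  have Rm: "A \<inter> {b<..} \<in> sets lborel" using R by (metis greaterThan_borel sets_lborel Int_absorb1 sets.empty_sets)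
  have Am: "A \<in> sets lborel" by (subst eqA) (use Lm Rm mid in auto)
  moreover have "algebraic (measure lborel A)" if "emeasure lborel A < \<infinity>"
  proof -
    have "A \<inter> {..<a} = {}" using L ray_inf1[OF _ Am, of a] that by auto
    moreover have "A \<inter> {b<..} = {}" using R ray_inf2[OF _ Am, of b] that by auto
    ultimately have "A = A \<inter> {a..b}" using eqA by auto
    thus ?thesis using mid by metis
  qed
  ultimately show ?thesis by blast
qed



lemma alg_sum: "(\<And>i. i \<in> I \<Longrightarrow> algebraic (f i)) \<Longrightarrow> algebraic (sum f I)"
proof (induction I rule: infinite_finite_induct)
  case (insert x F) thus ?case by (simp add: alg_add)
qed auto

lemma alg_poly1:
  assumes "alg_poly 1 P"
  shows "\<exists>q. (\<forall>i. algebraic (coeff q i)) \<and> (\<forall>x. P x = poly q (x 0))"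
  using assms
proof (induction rule: alg_poly.induct)
  case (const c)
  show ?case by (rule exI[of _ "[:c:]"]) (auto simp: const coeff_pCons split: nat.splits)
next
  case (var i)
  show ?case by (rule exI[of _ "[:0, 1:]"]) (use var in \<open>auto simp: coeff_pCons split: nat.splits\<close>)
next
  case (add P Q)
  then obtain p q where "\<forall>i. algebraic (coeff p i)" "\<forall>x. P x = poly p (x 0)"
    "\<forall>i. algebraic (coeff q i)" "\<forall>x. Q x = poly q (x 0)" by blast
  thus ?case by (intro exI[of _ "p + q"]) (auto intro: alg_add)
next
  case (mult P Q)
  then obtain p q where "\<forall>i. algebraic (coeff p i)" "\<forall>x. P x = poly p (x 0)"
    "\<forall>i. algebraic (coeff q i)" "\<forall>x. Q x = poly q (x 0)" by blast
  thus ?case by (intro exI[of _ "p * q"]) (auto simp: coeff_mult intro!: alg_sum alg_mult)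
qed

lemma poly_sign_same:
  fixes q :: "real poly"
  assumes nz: "\<forall>z. min x y \<le> z \<and> z \<le> max x y \<longrightarrow> poly q z \<noteq> 0"
  shows "(0 < poly q x \<longleftrightarrow> 0 < poly q y) \<and> (0 \<le> poly q x \<longleftrightarrow> 0 \<le> poly q y)"
proof -
  have nx: "poly q x \<noteq> 0" and ny: "poly q y \<noteq> 0" using nz by auto
  have "0 < poly q x \<longleftrightarrow> 0 < poly q y"
  proof (cases x y rule: linorder_cases)
    case less
    show ?thesis
    proof (rule ccontr)
      assume "\<not> ?thesis"
      hence "(0 < poly q x \<and> poly q y < 0) \<or> (poly q x < 0 \<and> 0 < poly q y)" using nx ny by linarith
      then obtain z where "x < z" "z < y" "poly q z = 0"
        using poly_IVT_neg[OF less] poly_IVT_pos[OF less] by blast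
      thus False using nz less by auto
    qed
  next
    case greater
    show ?thesis
    proof (rule ccontr)
      assume "\<not> ?thesis"
      hence "(0 < poly q y \<and> poly q x < 0) \<or> (poly q y < 0 \<and> 0 < poly q x)" using nx ny by linarith
      then obtain z where "y < z" "z < x" "poly q z = 0"
        using poly_IVT_neg[OF greater] poly_IVT_pos[OF greater] by blast
      thus False using nz greater by auto
    qed
  qed simp
  thus ?thesis using nx ny by linarith
qed

lemma ball_prod_cong: "(\<And>a b. (a,b) \<in> S \<Longrightarrow> f a b = g a b) \<Longrightarrow> (\<forall>(a,b)\<in>S. f a b) = (\<forall>(a,b)\<in>S. g a b)"
  by (auto simp: Ball_def)

lemma lessThan_1_nat: "{..<1::nat} = {0}" by auto

lemma transfer1:
  assumes A: "A \<in> sets lborel"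
  shows "emeasure (PiM {..<1} (\<lambda>_. lborel)) {x \<in> Rn 1. x 0 \<in> A} = emeasure lborel A"
    "measure (PiM {..<1} (\<lambda>_. lborel)) {x \<in> Rn 1. x 0 \<in> A} = measure lborel A"
proof -
  interpret product_sigma_finite "\<lambda>_::nat. lborel :: real measure" by standard
  have d: "distr (PiM {0} (\<lambda>_. lborel)) lborel (\<lambda>x. x (0::nat)) = (lborel :: real measure)"
    using distr_singleton[of 0] by simp
  have sp: "(\<lambda>x. x 0) -` A \<inter> space (PiM {0::nat} (\<lambda>_. lborel :: real measure)) = {x \<in> Rn 1. x 0 \<in> A}"
    by (auto simp: Rn_def space_PiM lessThan_1_nat)
  have meas: "(\<lambda>x. x 0) \<in> measurable (PiM {0::nat} (\<lambda>_. lborel :: real measure)) lborel"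
    by (rule measurable_component_singleton) simp
  have "emeasure lborel A = emeasure (distr (PiM {0} (\<lambda>_. lborel)) lborel (\<lambda>x. x (0::nat))) A"
    by (simp add: d)
  also have "\<dots> = emeasure (PiM {..<1} (\<lambda>_. lborel)) {x \<in> Rn 1. x 0 \<in> A}"
    by (subst emeasure_distr[OF meas A]) (simp add: sp lessThan_Suc)
  finally show e: "emeasure (PiM {..<1} (\<lambda>_. lborel)) {x \<in> Rn 1. x 0 \<in> A} = emeasure lborel A" ..
  thus "measure (PiM {..<1} (\<lambda>_. lborel)) {x \<in> Rn 1. x 0 \<in> A} = measure lborel A"
    by (simp add: measure_def)
qed

lemma vol1_alg:
  assumes adm: "admissible 1 S"
  shows "algebraic (vol 1 S)"
proof -
  obtain F where F: "finite F" "S = \<Union>(basic_set 1 ` F)"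
      "\<forall>cs\<in>F. \<forall>(P, _) \<in> set cs. alg_poly 1 P"
    and fin: "emeasure (PiM {..<1} (\<lambda>_. lborel)) S < \<infinity>"
    using adm unfolding admissible_def by blast
  define qq where "qq P = (SOME q. (\<forall>i. algebraic (coeff q i)) \<and> (\<forall>x. P x = poly q (x 0)))"
    for P :: "(nat \<Rightarrow> real) \<Rightarrow> real"
  have qq: "(\<forall>i. algebraic (coeff (qq P) i)) \<and> (\<forall>x. P x = poly (qq P) (x 0))" if "alg_poly 1 P" for P
    unfolding qq_def by (rule someI_ex[OF alg_poly1[OF that]])
  have Pq: "P x = poly (qq P) (x 0)" if "cs \<in> F" "(P, s) \<in> set cs" for cs P s x
    using qq[of P] F(3) that by fastforce
  define sat where "sat t cs \<longleftrightarrow> (\<forall>(P, s)\<in>set cs. if s then poly (qq P) t > 0 else poly (qq P) t \<ge> 0)"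
    for t cs
  define A where "A = {t. \<exists>cs\<in>F. sat t cs}"
  have bs: "x \<in> basic_set 1 cs \<longleftrightarrow> x \<in> Rn 1 \<and> sat (x 0) cs" if "cs \<in> F" for cs x
  proof -
    have "(\<forall>(P, strict)\<in>set cs. if strict then P x > 0 else P x \<ge> 0) \<longleftrightarrow> sat (x 0) cs"
      unfolding sat_def
    proof (rule ball_prod_cong)
      fix a b assume "(a, b) \<in> set cs"
      from Pq[OF that this] have e: "a x = poly (qq a) (x 0)" .
      show "(if b then 0 < a x else 0 \<le> a x) = (if b then 0 < poly (qq a) (x 0) else 0 \<le> poly (qq a) (x 0))"
        by (simp only: e)
    qed
    thus ?thesis by (simp add: basic_set_def)
  qed
  have SA: "S = {x \<in> Rn 1. x 0 \<in> A}"
    unfolding F(2) A_def using bs by blast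
  define Z where "Z = (\<Union>cs\<in>F. \<Union>Ps\<in>set cs. if qq (fst Ps) = 0 then {} else {t. poly (qq (fst Ps)) t = 0})"
  have finZ: "finite Z" unfolding Z_def using F(1) by (auto intro!: finite_UN_I poly_roots_finite)
  have algZ: "\<forall>z\<in>Z. algebraic z"
  proof
    fix z assume "z \<in> Z"
    then obtain cs P s where cs: "cs \<in> F" "(P, s) \<in> set cs" "qq P \<noteq> 0" "poly (qq P) z = 0"
      unfolding Z_def by (auto split: if_splits)
    have "alg_poly 1 P" using F(3) cs by fastforce
    hence ca: "\<And>i. algebraic (coeff (qq P) i)" using qq by blast
    show "algebraic z" by (rule alg_root[of "qq P", OF cs(3) ca cs(4)])
  qed
  have zc: "zconst Z A" unfolding zconst_def
  proof (intro allI impI)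
    fix x y assume H: "\<forall>z\<in>Z. \<not> (min x y \<le> z \<and> z \<le> max x y)"
    have "sat x cs \<longleftrightarrow> sat y cs" if cs: "cs \<in> F" for cs
    proof -
      have "(if s then poly (qq P) x > 0 else poly (qq P) x \<ge> 0) \<longleftrightarrow>
            (if s then poly (qq P) y > 0 else poly (qq P) y \<ge> 0)" if Ps: "(P, s) \<in> set cs" for P s
      proof (cases "qq P = 0")
        case True thus ?thesis by simp
      next
        case False
        have "\<forall>z. min x y \<le> z \<and> z \<le> max x y \<longrightarrow> poly (qq P) z \<noteq> 0"
        proof (intro allI impI notI)
          fix z assume "min x y \<le> z \<and> z \<le> max x y" "poly (qq P) z = 0"
          moreover have "z \<in> Z" unfolding Z_def using cs Ps False \<open>poly (qq P) z = 0\<close>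
            by (intro UN_I[OF cs] UN_I[OF Ps]) auto
          ultimately show False using H by blast
        qed
        from poly_sign_same[OF this] show ?thesis by simp
      qed
      thus ?thesis unfolding sat_def by (rule ball_prod_cong)
    qed
    thus "x \<in> A \<longleftrightarrow> y \<in> A" unfolding A_def by blast
  qed
  have tot: "A \<in> sets lborel \<and> (emeasure lborel A < \<infinity> \<longrightarrow> algebraic (measure lborel A))"
    by (rule zconst_total[OF finZ algZ zc])
  hence Am: "A \<in> sets lborel" by blast
  have "emeasure lborel A < \<infinity>" using fin transfer1(1)[OF Am] SA by simp
  hence "algebraic (measure lborel A)" using tot by blast
  thus ?thesis unfolding vol_def SA transfer1(2)[OF Am] .
qed

lemma interval_vol:
  fixes c :: real
  assumes c: "0 \<le> c" "algebraic c"
  shows "admissible 1 {x \<in> Rn 1. x 0 \<in> {0..c}} \<and> vol 1 {x \<in> Rn 1. x 0 \<in> {0..c}} = c"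
proof -
  define cs where "cs = [(\<lambda>x::nat\<Rightarrow>real. x 0, False), (\<lambda>x. c + -1 * x 0, False)]"
  have bs: "basic_set 1 cs = {x \<in> Rn 1. x 0 \<in> {0..c}}"
    by (auto simp: basic_set_def cs_def)
  have p1: "alg_poly 1 (\<lambda>x. x 0)" by (rule alg_poly.var) simp
  have p2: "alg_poly 1 (\<lambda>x. c + -1 * x 0)"
    by (rule alg_poly.add[OF alg_poly.const[OF c(2)] alg_poly.mult[OF alg_poly.const alg_poly.var]]) simp_all
  have e: "emeasure (PiM {..<1} (\<lambda>_. lborel)) {x \<in> Rn 1. x 0 \<in> {0..c}} = ennreal c"
    using transfer1(1)[of "{0..c}"] c by simp
  have "admissible 1 {x \<in> Rn 1. x 0 \<in> {0..c}}"
    unfolding admissible_def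
  proof (intro conjI exI[of _ "{cs}"])
    show "{x \<in> Rn 1. x 0 \<in> {0..c}} = \<Union> (basic_set 1 ` {cs})" using bs by simp
    show "\<forall>cs\<in>{cs}. \<forall>(P, _)\<in>set cs. alg_poly 1 P" using p1 p2 by (simp add: cs_def)
  qed (use e in auto)
  moreover have "vol 1 {x \<in> Rn 1. x 0 \<in> {0..c}} = c"
    using transfer1(2)[of "{0..c}"] c by (simp add: vol_def)
  ultimately show ?thesis by blast
qed

lemma admissible_empty: "admissible 1 {}"
  unfolding admissible_def by (intro conjI exI[of _ "{}"]) auto

lemma alg_dims:
  assumes "algebraic a" shows "1 \<in> real_period_dims a"
proof (cases "0 \<le> a")
  case True
  from interval_vol[OF True assms] show ?thesis
    unfolding real_period_dims_def using admissible_empty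
    by (intro CollectI conjI order.refl exI[of _ "{x \<in> Rn 1. x 0 \<in> {0..a}}"] exI[of _ "{}"])
       (auto simp: vol_def)
next
  case False
  have "0 \<le> -a" "algebraic (-a)" using False assms by auto
  from interval_vol[OF this] show ?thesis
    unfolding real_period_dims_def using admissible_empty
    by (intro CollectI conjI order.refl exI[of _ "{x \<in> Rn 1. x 0 \<in> {0..-a}}"] exI[of _ "{}"])
       (auto simp: vol_def)
qed

lemma dims_ge1: "n \<in> real_period_dims a \<Longrightarrow> n \<ge> 1"
  by (simp add: real_period_dims_def)

lemma real_deg_alg:
  assumes "algebraic a"
  shows "real_period a \<and> real_deg a = (if a = 0 then 0 else 1)"
proof -
  have d: "1 \<in> real_period_dims a" by (rule alg_dims[OF assms])
  hence rp: "real_period a" by (auto simp: real_period_def)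
  have "(LEAST n. n \<in> real_period_dims a) = 1"
    by (rule Least_equality[where P="\<lambda>n. n \<in> real_period_dims a", OF d]) (rule dims_ge1)
  thus ?thesis using rp by (simp add: real_deg_def one_enat_def)
qed

lemma real_deg_le1:
  assumes rp: "real_period a" and le: "real_deg a \<le> 1"
  shows "algebraic a"
proof (cases "a = 0")
  case False
  obtain n where n: "n \<in> real_period_dims a" using rp by (auto simp: real_period_def)
  define m where "m = (LEAST n. n \<in> real_period_dims a)"
  have m: "m \<in> real_period_dims a" unfolding m_def by (rule LeastI[where P="\<lambda>n. n \<in> real_period_dims a", OF n])
  have "enat m \<le> 1" using le False rp by (simp add: real_deg_def m_def)
  hence "m \<le> 1" by (simp add: one_enat_def)
  with dims_ge1[OF m] have "m = 1" by simp
  with m obtain S1 S2 where "admissible 1 S1" "admissible 1 S2" "a = vol 1 S1 - vol 1 S2"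
    by (auto simp: real_period_dims_def)
  thus ?thesis using vol1_alg alg_diff by metis
qed simp

theorem mainTheorem3:
  fixes p :: complex
  shows "(deg p = 1 \<longleftrightarrow> p \<noteq> 0 \<and> algebraic p)
         \<and> (algebraic p \<longrightarrow> period p)
         \<and> (period p \<and> deg p \<le> 1 \<longrightarrow> algebraic p)"
proof -
  have A: "algebraic p \<Longrightarrow> period p \<and> real_deg (Re p) \<le> 1 \<and> real_deg (Im p) \<le> 1"
    using real_deg_alg alg_complex_iff by (auto simp: period_def)
  have B: "period p \<Longrightarrow> deg p \<le> 1 \<Longrightarrow> algebraic p"
  proof -
    assume pp: "period p" and d: "deg p \<le> 1"
    hence "real_deg (Re p) \<le> 1" "real_deg (Im p) \<le> 1" by (auto simp: deg_def)
    thus "algebraic p" using pp real_deg_le1 alg_complex_iff by (auto simp: period_def)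
  qed
  have C: "deg p = 1 \<longleftrightarrow> p \<noteq> 0 \<and> algebraic p"
  proof
    assume d: "deg p = 1"
    hence pp: "period p" by (auto simp: deg_def split: if_splits)
    have "p \<noteq> 0"
    proof
      assume "p = 0"
      hence "deg p = 0" using pp by (simp add: deg_def real_deg_def)
      thus False using d by simp
    qed
    thus "p \<noteq> 0 \<and> algebraic p" using B pp d by simp
  next
    assume h: "p \<noteq> 0 \<and> algebraic p"
    hence ra: "algebraic (Re p)" "algebraic (Im p)" using alg_complex_iff by auto
    have pp: "period p" using A h by blast
    have "Re p \<noteq> 0 \<or> Im p \<noteq> 0" using h complex_eqI by force
    thus "deg p = 1" using pp real_deg_alg[OF ra(1)] real_deg_alg[OF ra(2)]
      by (auto simp: deg_def)
  qed
  show ?thesis using A B C by blast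
qed

end
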